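(* Let $F$ be a graph and $r\ge 2$ an integer. There is a constant $C=C(F,r)$ such that for every $n$ and every $n$-vertex $r$-uniform hypergraph $\mathcal{H}$ that is $\mathrm{Tr}(F)$-free, the shadow graph of $\mathcal{H}$ contains at most $C\,n^{|V(F)|-1}$ copies of $F$.
   Context: The shadow graph of a hypergraph $\mathcal{H}$ has vertex set $V(\mathcal{H})$, with $uv$ an edge if and only if some hyperedge of $\mathcal{H}$ contains both $u$ and $v$. $\mathrm{Tr}(F)$ denotes the family of $r$-uniform hypergraphs $\mathcal{F}$ for which $V(F)\subseteq V(\mathcal{F})$ and there is a bijection $f$ from the edges of $F$ to the hyperedges of $\mathcal{F}$ with $f(e)\cap V(F)=e$ for every edge $e$ of $F$. An $r$-uniform hypergraph is $\mathrm{Tr}(F)$-free if it contains no subhypergraph isomorphic to a member of $\mathrm{Tr}(F)$. Copies of $F$ are not necessarily induced subgraphs. *)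

theory Defs
  imports Complex_Main
begin

definition is_graph :: "'a set \<Rightarrow> 'a set set \<Rightarrow> bool" where
  "is_graph V E \<longleftrightarrow> finite V \<and> (\<forall>e\<in>E. e \<subseteq> V \<and> card e = 2)"

definition uniform_hypergraph :: "nat \<Rightarrow> 'b set \<Rightarrow> 'b set set \<Rightarrow> bool" where
  "uniform_hypergraph r V H \<longleftrightarrow> finite V \<and> (\<forall>h\<in>H. h \<subseteq> V \<and> card h = r)"

text \<open>Edge set of the shadow graph (vertex set is that of the hypergraph).\<close>
definition shadow_edges :: "'b set set \<Rightarrow> 'b set set" where
  "shadow_edges H = {{u, v} | u v. u \<noteq> v \<and> (\<exists>h\<in>H. u \<in> h \<and> v \<in> h)}"

text \<open>H contains (a subhypergraph isomorphic to) a member of Tr(F): an injective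
  embedding phi of V(F) into V(H) and an injective map f from edges of F to
  hyperedges of H with f(e) \<inter> phi(V(F)) = phi(e).\<close>
definition contains_Tr :: "'a set \<Rightarrow> 'a set set \<Rightarrow> 'b set \<Rightarrow> 'b set set \<Rightarrow> bool" where
  "contains_Tr VF EF V H \<longleftrightarrow>
     (\<exists>\<phi> f. inj_on \<phi> VF \<and> \<phi> ` VF \<subseteq> V \<and> inj_on f EF \<and> f ` EF \<subseteq> H \<and>
        (\<forall>e\<in>EF. f e \<inter> \<phi> ` VF = \<phi> ` e))"

definition Tr_free :: "'a set \<Rightarrow> 'a set set \<Rightarrow> 'b set \<Rightarrow> 'b set set \<Rightarrow> bool" where
  "Tr_free VF EF V H \<longleftrightarrow> \<not> contains_Tr VF EF V H"

text \<open>Copies of F in a graph (V,E): subgraphs (W,D), W \<subseteq> V, D \<subseteq> E, isomorphic to F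
  (not necessarily induced).\<close>
definition copies :: "'a set \<Rightarrow> 'a set set \<Rightarrow> 'b set \<Rightarrow> 'b set set \<Rightarrow> ('b set \<times> 'b set set) set" where
  "copies VF EF V E = {(W, D). W \<subseteq> V \<and> D \<subseteq> E \<and>
      (\<exists>g. bij_betw g VF W \<and> D = (\<lambda>e. g ` e) ` EF)}"

end

theory Submission
  imports Defs "HOL-Library.FuncSet"
begin

definition sel :: "nat set set \<Rightarrow> nat \<Rightarrow> nat \<Rightarrow> nat set" where
  "sel H x y = (if \<exists>h\<in>H. x \<in> h \<and> y \<in> h then SOME h. h \<in> H \<and> x \<in> h \<and> y \<in> h else {})"

lemma sel_props:
  assumes "\<exists>h\<in>H. x \<in> h \<and> y \<in> h"
  shows "sel H x y \<in> H \<and> x \<in> sel H x y \<and> y \<in> sel H x y"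
proof -
  have "\<exists>h. h \<in> H \<and> x \<in> h \<and> y \<in> h" using assms by blast
  then show ?thesis unfolding sel_def using assms someI_ex[OF \<open>\<exists>h. h \<in> H \<and> x \<in> h \<and> y \<in> h\<close>] by simp
qed

lemma sel_card:
  assumes "uniform_hypergraph r V H"
  shows "finite (sel H x y) \<and> card (sel H x y) \<le> r"
proof (cases "\<exists>h\<in>H. x \<in> h \<and> y \<in> h")
  case True
  then have "sel H x y \<in> H" using sel_props by blast
  then show ?thesis using assms unfolding uniform_hypergraph_def
    by (auto intro: finite_subset)
next
  case False
  then show ?thesis unfolding sel_def by auto
qed

definition Bset :: "'a set \<Rightarrow> nat set \<Rightarrow> nat set set \<Rightarrow> 'a \<Rightarrow> 'a \<Rightarrow> 'a \<Rightarrow> ('a \<Rightarrow> nat) set" where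
  "Bset VF V H a b c = {g \<in> VF \<rightarrow>\<^sub>E V. g c \<in> sel H (g a) (g b)}"

lemma Bset_card:
  assumes fin: "finite VF" and c: "c \<in> VF" and ac: "a \<noteq> c" and bc: "b \<noteq> c"
    and U: "uniform_hypergraph r V H"
  shows "card (Bset VF V H a b c) \<le> r * card V ^ (card VF - 1)"
proof -
  define P where "P = (VF - {c}) \<rightarrow>\<^sub>E V"
  define S where "S = (SIGMA g':P. sel H (g' a) (g' b))"
  have finV: "finite V" using U unfolding uniform_hypergraph_def by blast
  have finP: "finite P" unfolding P_def using fin finV by (simp add: finite_PiE)
  have finS: "finite S" unfolding S_def using finP sel_card[OF U] by blast
  have sub: "Bset VF V H a b c \<subseteq> (\<lambda>(g', v). g'(c := v)) ` S"
  proof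
    fix g assume g: "g \<in> Bset VF V H a b c"
    define g' where "g' = g(c := undefined)"
    have "g' \<in> P" using g unfolding P_def g'_def Bset_def PiE_def extensional_def by auto
    moreover have "g c \<in> sel H (g' a) (g' b)" using g ac bc unfolding g'_def Bset_def by auto
    ultimately have "(g', g c) \<in> S" unfolding S_def by blast
    moreover have "g = g'(c := g c)" unfolding g'_def by simp
    ultimately show "g \<in> (\<lambda>(g', v). g'(c := v)) ` S" by force
  qed
  have "card (Bset VF V H a b c) \<le> card ((\<lambda>(g', v). g'(c := v)) ` S)"
    using sub finS by (simp add: card_mono)
  also have "\<dots> \<le> card S" using finS card_image_le by blast
  also have "\<dots> = (\<Sum>g'\<in>P. card (sel H (g' a) (g' b)))"
    unfolding S_def using finP sel_card[OF U] by (simp add: card_SigmaI)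
  also have "\<dots> \<le> (\<Sum>g'\<in>P. r)" by (rule sum_mono) (use sel_card[OF U] in blast)
  also have "\<dots> = card P * r" by simp
  also have "card P = card V ^ (card VF - 1)"
    unfolding P_def using fin c by (simp add: card_PiE)
  finally show ?thesis by (simp add: mult.commute)
qed

lemma copies_bad:
  assumes G: "is_graph VF EF" and U: "uniform_hypergraph r V H"
    and TF: "Tr_free VF EF V H"
    and WD: "(W, D) \<in> copies VF EF V (shadow_edges H)"
  shows "(W, D) \<in> (\<lambda>g. (g ` VF, (\<lambda>e. g ` e) ` EF)) `
           (\<Union>(a, b, c) \<in> {(a, b, c). a \<in> VF \<and> b \<in> VF \<and> c \<in> VF \<and> a \<noteq> c \<and> b \<noteq> c}.
              Bset VF V H a b c)"
proof -
  from WD obtain g0 where WV: "W \<subseteq> V" and DE: "D \<subseteq> shadow_edges H"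
    and bij: "bij_betw g0 VF W" and Dd: "D = (\<lambda>e. g0 ` e) ` EF"
    unfolding copies_def by blast
  define g where "g = restrict g0 VF"
  have gW: "g ` VF = W" using bij unfolding g_def bij_betw_def by simp
  have ginj: "inj_on g VF" using bij unfolding g_def bij_betw_def
    by (simp add: inj_on_def)
  have EFsub: "\<And>e. e \<in> EF \<Longrightarrow> e \<subseteq> VF" using G unfolding is_graph_def by blast
  have geq: "\<And>e. e \<in> EF \<Longrightarrow> g ` e = g0 ` e"
    unfolding g_def using EFsub by (auto simp: restrict_def)
  have Dg: "D = (\<lambda>e. g ` e) ` EF" using Dd geq by (auto intro!: image_cong)
  have gP: "g \<in> VF \<rightarrow>\<^sub>E V" unfolding g_def using gW WV g_def by auto
  have "\<exists>e\<in>EF. \<forall>h\<in>H. h \<inter> g ` VF \<noteq> g ` e"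
  proof (rule ccontr)
    assume "\<not> ?thesis"
    then have all: "\<forall>e\<in>EF. \<exists>h. h \<in> H \<and> h \<inter> g ` VF = g ` e" by blast
    define f where "f = (\<lambda>e. SOME h. h \<in> H \<and> h \<inter> g ` VF = g ` e)"
    have fp: "\<And>e. e \<in> EF \<Longrightarrow> f e \<in> H \<and> f e \<inter> g ` VF = g ` e"
    proof -
      fix e assume "e \<in> EF"
      then have "\<exists>h. h \<in> H \<and> h \<inter> g ` VF = g ` e" using all by blast
      then show "f e \<in> H \<and> f e \<inter> g ` VF = g ` e" unfolding f_def by (rule someI_ex)
    qed
    have "inj_on f EF"
    proof (rule inj_onI)
      fix e1 e2 assume e: "e1 \<in> EF" "e2 \<in> EF" "f e1 = f e2"
      then have "g ` e1 = g ` e2" using fp by metis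
      then show "e1 = e2" using ginj EFsub e(1,2) by (simp add: inj_on_image_eq_iff)
    qed
    moreover have "\<forall>e\<in>EF. f e \<inter> g ` VF = g ` e" using fp by blast
    moreover have "f ` EF \<subseteq> H" using fp by blast
    ultimately have "contains_Tr VF EF V H" unfolding contains_Tr_def
      using ginj gW WV by (intro exI[of _ g] exI[of _ f]) simp
    then show False using TF unfolding Tr_free_def by blast
  qed
  then obtain e where e: "e \<in> EF" and bad: "\<forall>h\<in>H. h \<inter> g ` VF \<noteq> g ` e" by blast
  obtain a b where ab: "e = {a, b}" "a \<noteq> b" using G e unfolding is_graph_def
    by (auto simp: card_2_iff)
  have aV: "a \<in> VF" "b \<in> VF" using EFsub[OF e] ab by auto
  have "g ` e \<in> shadow_edges H" using DE Dg e by blast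
  then have "\<exists>h\<in>H. g a \<in> h \<and> g b \<in> h" unfolding shadow_edges_def ab
    by (auto simp: doubleton_eq_iff)
  then have h0: "sel H (g a) (g b) \<in> H" "g a \<in> sel H (g a) (g b)" "g b \<in> sel H (g a) (g b)"
    using sel_props by blast+
  then have "sel H (g a) (g b) \<inter> g ` VF \<noteq> {g a, g b}" using bad ab by auto
  moreover have "{g a, g b} \<subseteq> sel H (g a) (g b) \<inter> g ` VF" using h0 aV by auto
  ultimately obtain c where c: "c \<in> VF" "g c \<in> sel H (g a) (g b)" "g c \<noteq> g a" "g c \<noteq> g b"
    by blast
  then have "a \<noteq> c" "b \<noteq> c" by auto
  then have "g \<in> Bset VF V H a b c" using gP c unfolding Bset_def by blast
  then have "g \<in> (\<Union>(a, b, c) \<in> {(a, b, c). a \<in> VF \<and> b \<in> VF \<and> c \<in> VF \<and> a \<noteq> c \<and> b \<noteq> c}.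
              Bset VF V H a b c)" using aV c \<open>a \<noteq> c\<close> \<open>b \<noteq> c\<close> by blast
  moreover have "(W, D) = (g ` VF, (\<lambda>e. g ` e) ` EF)" using gW Dg by simp
  ultimately show ?thesis by blast
qed

theorem proposition4:
  fixes VF :: "'a set" and EF :: "'a set set" and r :: nat
  assumes "is_graph VF EF" and "r \<ge> 2"
  shows "\<exists>C::real. \<forall>(n::nat) (V::nat set) (H::nat set set).
           uniform_hypergraph r V H \<and> card V = n \<and> Tr_free VF EF V H \<longrightarrow>
           real (card (copies VF EF V (shadow_edges H))) \<le> C * real n ^ (card VF - 1)"
proof -
  define T where "T = {(a, b, c). a \<in> VF \<and> b \<in> VF \<and> c \<in> VF \<and> a \<noteq> c \<and> b \<noteq> c}"
  have finVF: "finite VF" using assms(1) unfolding is_graph_def by blast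
  have finT: "finite T" unfolding T_def
    by (rule finite_subset[of _ "VF \<times> VF \<times> VF"]) (auto simp: finVF)
  show ?thesis
  proof (rule exI[of _ "real (card T * r)"], intro allI impI)
    fix n V H assume h: "uniform_hypergraph r V (H :: nat set set) \<and> card V = n \<and> Tr_free VF EF V H"
    then have U: "uniform_hypergraph r V H" and n: "card V = n" and TF: "Tr_free VF EF V H" by auto
    define B where "B = (\<Union>(a, b, c) \<in> T. Bset VF V H a b c)"
    have finB: "\<And>t. t \<in> T \<Longrightarrow> finite (case t of (a, b, c) \<Rightarrow> Bset VF V H a b c)"
    proof -
      fix t assume "t \<in> T"
      have "finite (VF \<rightarrow>\<^sub>E V)" using finVF U unfolding uniform_hypergraph_def
        by (simp add: finite_PiE)
      then show "finite (case t of (a, b, c) \<Rightarrow> Bset VF V H a b c)"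
        unfolding Bset_def by (cases t) auto
    qed
    have finBB: "finite B" unfolding B_def using finT finB by (intro finite_UN_I) auto
    have "copies VF EF V (shadow_edges H) \<subseteq> (\<lambda>g. (g ` VF, (\<lambda>e. g ` e) ` EF)) ` B"
    proof
      fix x assume "x \<in> copies VF EF V (shadow_edges H)"
      then obtain W D where x: "x = (W, D)" "(W, D) \<in> copies VF EF V (shadow_edges H)"
        by (cases x) blast
      show "x \<in> (\<lambda>g. (g ` VF, (\<lambda>e. g ` e) ` EF)) ` B"
        unfolding B_def T_def x(1) by (rule copies_bad[OF assms(1) U TF x(2)])
    qed
    then have "card (copies VF EF V (shadow_edges H)) \<le> card ((\<lambda>g. (g ` VF, (\<lambda>e. g ` e) ` EF)) ` B)"
      using finBB by (intro card_mono) auto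
    also have "\<dots> \<le> card B" using finBB by (rule card_image_le)
    also have "card B \<le> (\<Sum>t\<in>T. card (case t of (a, b, c) \<Rightarrow> Bset VF V H a b c))"
      unfolding B_def by (rule card_UN_le[OF finT])
    also have "\<dots> \<le> (\<Sum>t\<in>T. r * n ^ (card VF - 1))"
    proof (rule sum_mono)
      fix t assume "t \<in> T"
      then obtain a b c where t: "t = (a, b, c)" "c \<in> VF" "a \<noteq> c" "b \<noteq> c"
        unfolding T_def by blast
      show "card (case t of (a, b, c) \<Rightarrow> Bset VF V H a b c) \<le> r * n ^ (card VF - 1)"
        using Bset_card[OF finVF t(2) t(3) t(4) U] t(1) n by simp
    qed
    also have "\<dots> = card T * r * n ^ (card VF - 1)" by simp
    finally have "card (copies VF EF V (shadow_edges H)) \<le> card T * r * n ^ (card VF - 1)" .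
    then have "real (card (copies VF EF V (shadow_edges H))) \<le> real (card T * r * n ^ (card VF - 1))"
      by linarith
    then show "real (card (copies VF EF V (shadow_edges H))) \<le> real (card T * r) * real n ^ (card VF - 1)"
      by simp
  qed
qed

end
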